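(* Consider a rooted tree in which every internal node has exactly two (ordered) children, and assign polynomials in $\mathbb{R}[x]$ to its nodes as follows: each leaf is assigned an arbitrary polynomial of degree $1$, and an internal node $v$ with children $u,w$ is assigned $p_v=p_u\oplus p_w:=p_u+p_w+(p_u-p_w)\,x^{2^{h(p_u-p_w)}}$. Then if the tree has $n$ nodes, every polynomial produced has degree at most $2\uparrow\uparrow O(\log n)$.
   Context: For a polynomial $p$, $h(p)=0$ if $x=0$ is not a root of $p$, and otherwise $h(p)$ is the multiplicity of the root $0$ (the lowest degree of a nonzero monomial of $p$). $2\uparrow\uparrow1=2$ and $2\uparrow\uparrow k=2^{2\uparrow\uparrow(k-1)}$; $\log$ base 2; $O(\cdot)$ hides an absolute constant. *)

theory Defs
  imports "HOL-Computational_Algebra.Polynomial" Complex_Main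
begin

datatype btree = Leaf "real poly" | Node btree btree

fun num_nodes :: "btree \<Rightarrow> nat" where
  "num_nodes (Leaf p) = 1"
| "num_nodes (Node l r) = Suc (num_nodes l + num_nodes r)"

fun leaves_deg1 :: "btree \<Rightarrow> bool" where
  "leaves_deg1 (Leaf p) = (degree p = 1)"
| "leaves_deg1 (Node l r) = (leaves_deg1 l \<and> leaves_deg1 r)"

definition hmult :: "real poly \<Rightarrow> nat" where
  "hmult p = order 0 p"

definition oplus :: "real poly \<Rightarrow> real poly \<Rightarrow> real poly" where
  "oplus p q = p + q + (p - q) * monom 1 (2 ^ hmult (p - q))"

fun tpoly :: "btree \<Rightarrow> real poly" where
  "tpoly (Leaf p) = p"
| "tpoly (Node l r) = oplus (tpoly l) (tpoly r)"

text \<open>Subtrees (including the tree itself): the nodes of the tree.\<close>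
fun subtrees :: "btree \<Rightarrow> btree set" where
  "subtrees (Leaf p) = {Leaf p}"
| "subtrees (Node l r) = insert (Node l r) (subtrees l \<union> subtrees r)"

fun tower :: "nat \<Rightarrow> nat" where
  "tower 0 = 1"
| "tower (Suc k) = 2 ^ tower k"

end

theory Submission
  imports Defs
begin

lemma order0_char:
  assumes "p \<noteq> 0" "\<forall>i<n. coeff p i = 0" "coeff p n \<noteq> 0"
  shows "order 0 p = n"
proof -
  have "monom 1 n dvd p" using assms(2) monom_1_dvd_iff' by blast
  then have "n \<le> order 0 p" using monom_1_dvd_iff[OF assms(1)] by simp
  moreover have "\<not> Suc n \<le> order 0 p"
  proof
    assume "Suc n \<le> order 0 p"
    then have "monom 1 (Suc n) dvd p" using monom_1_dvd_iff[OF assms(1)] by simp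
    then show False using assms(3) monom_1_dvd_iff' by blast
  qed
  ultimately show ?thesis by simp
qed

lemma order0_low:
  assumes "p \<noteq> 0" "i < order 0 p" shows "coeff p i = 0"
proof -
  have "monom 1 (order 0 p) dvd p" using monom_1_dvd_iff[OF assms(1)] by simp
  then show ?thesis using assms(2) monom_1_dvd_iff' by blast
qed

lemma order0_coeff:
  assumes "p \<noteq> 0" shows "coeff p (order 0 p) \<noteq> 0"
proof
  assume h: "coeff p (order 0 p) = 0"
  have "\<forall>k<Suc (order 0 p). coeff p k = 0"
    using order0_low[OF assms] h by (auto simp: less_Suc_eq)
  then have "monom 1 (Suc (order 0 p)) dvd p" using monom_1_dvd_iff' by blast
  then show False using monom_1_dvd_iff[OF assms] by simp
qed

lemma degree_oplus:
  "degree (oplus p q) \<le> max (degree p) (degree q) + 2 ^ hmult (p - q)"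
proof -
  define y where "y = monom (1::real) (2 ^ hmult (p - q))"
  have dy: "degree y \<le> 2 ^ hmult (p - q)" unfolding y_def by (rule degree_monom_le)
  have m1: "degree ((p - q) * y) \<le> degree (p - q) + degree y" by (rule degree_mult_le)
  have m2: "degree (p - q) \<le> max (degree p) (degree q)"
    by (simp add: degree_diff_le)
  have m3: "degree (p + q) \<le> max (degree p) (degree q)"
    by (simp add: degree_add_le)
  have m4: "degree ((p - q) * y) \<le> max (degree p) (degree q) + 2 ^ hmult (p - q)"
    using m1 m2 dy by (meson add_le_mono order_trans)
  have "degree (p + q + (p - q) * y) \<le> max (degree p) (degree q) + 2 ^ hmult (p - q)"
    using m3 m4 by (meson degree_add_le le_add1 order_trans)
  then show ?thesis unfolding oplus_def y_def .
qed

lemma oplus_same: "oplus p p = p + p"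
  by (simp add: oplus_def)

lemma subtrees_refl: "T \<in> subtrees T"
  by (cases T) auto

lemma subtrees_trans: "s \<in> subtrees u \<Longrightarrow> u \<in> subtrees T \<Longrightarrow> s \<in> subtrees T"
  by (induction T) auto

lemma subtrees_num: "s \<in> subtrees T \<Longrightarrow> num_nodes s \<le> num_nodes T"
  by (induction T) auto

lemma subtrees_deg1: "s \<in> subtrees T \<Longrightarrow> leaves_deg1 T \<Longrightarrow> leaves_deg1 s"
  by (induction T) auto

lemma num_nodes_pos: "1 \<le> num_nodes T"
  by (cases T) auto

definition big :: "nat \<Rightarrow> btree \<Rightarrow> bool" where
  "big K T = (\<exists>l r. Node l r \<in> subtrees T \<and> tpoly l \<noteq> tpoly r \<and> K \<le> hmult (tpoly l - tpoly r))"

lemma big_Leaf[simp]: "\<not> big K (Leaf p)"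
  by (auto simp: big_def)

lemma big_Node: "big K (Node l r) \<longleftrightarrow>
   (tpoly l \<noteq> tpoly r \<and> K \<le> hmult (tpoly l - tpoly r)) \<or> big K l \<or> big K r"
  by (auto simp: big_def)

lemma big_sub: "s \<in> subtrees T \<Longrightarrow> big K s \<Longrightarrow> big K T"
  unfolding big_def using subtrees_trans by blast

lemma deg_notbig:
  "leaves_deg1 T \<Longrightarrow> \<not> big K T \<Longrightarrow> degree (tpoly T) \<le> num_nodes T * 2 ^ K"
proof (induction T)
  case (Leaf p)
  then show ?case by simp
next
  case (Node l r)
  have il: "degree (tpoly l) \<le> num_nodes l * 2 ^ K" using Node by (auto simp: big_Node)
  have ir: "degree (tpoly r) \<le> num_nodes r * 2 ^ K" using Node by (auto simp: big_Node)
  show ?case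
  proof (cases "tpoly l = tpoly r")
    case True
    have e: "tpoly (Node l r) = tpoly l + tpoly l"
      using True unfolding tpoly.simps oplus_def by simp
    have "degree (tpoly l + tpoly l) \<le> degree (tpoly l)" by (rule degree_add_le) auto
    then have "degree (tpoly (Node l r)) \<le> num_nodes l * 2 ^ K" using e il by simp
    then show ?thesis by (simp add: algebra_simps)
  next
    case False
    then have "hmult (tpoly l - tpoly r) < K" using Node.prems by (auto simp: big_Node)
    then have d2: "(2::nat) ^ hmult (tpoly l - tpoly r) \<le> 2 ^ K" by simp
    have d1: "degree (tpoly (Node l r)) \<le> max (degree (tpoly l)) (degree (tpoly r)) + 2 ^ hmult (tpoly l - tpoly r)"
      using degree_oplus by simp
    have d3: "max (degree (tpoly l)) (degree (tpoly r)) \<le> num_nodes l * 2^K + num_nodes r * 2^K"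
      using il ir by simp
    from d1 d2 d3 have "degree (tpoly (Node l r)) \<le> (num_nodes l * 2^K + num_nodes r * 2^K) + 2^K"
      by (meson add_le_mono order_trans)
    then show ?thesis by (simp add: algebra_simps)
  qed
qed

definition lo :: "nat \<Rightarrow> real poly \<Rightarrow> real poly" where
  "lo t p = (\<Sum>i\<le>t. monom (coeff p i) i)"
definition hi :: "nat \<Rightarrow> real poly \<Rightarrow> real poly" where
  "hi t p = p - lo t p"

lemma coeff_lo: "coeff (lo t p) i = (if i \<le> t then coeff p i else 0)"
  unfolding lo_def coeff_sum coeff_monom
  by (cases "i \<le> t") (auto simp: sum.delta' )

lemma coeff_hi: "coeff (hi t p) i = (if i \<le> t then 0 else coeff p i)"
  unfolding hi_def by (simp add: coeff_lo)

lemma coeff_y: "coeff ((p::real poly) * monom 1 s) i = (if s \<le> i then coeff p (i - s) else 0)"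
  by (auto simp: mult.commute[of p] coeff_monom_mult)

lemma coeff_deg: "degree r \<le> t \<Longrightarrow> t < i \<Longrightarrow> coeff r i = 0"
  by (simp add: coeff_eq_0)

definition Good :: "nat \<Rightarrow> nat \<Rightarrow> nat \<Rightarrow> real poly \<Rightarrow> real poly \<Rightarrow> bool" where
  "Good t B S q Ah = ((\<forall>i. coeff Ah i \<noteq> 0 \<longrightarrow> t < i \<and> i \<le> B) \<and>
      (\<forall>i < t + 1 + S. coeff (hi t q) i = coeff Ah i) \<and>
      (Ah = 0 \<longrightarrow> hi t q = 0))"

lemma hi_zero: "degree q \<le> t \<Longrightarrow> hi t q = 0"
  by (simp add: poly_eq_iff coeff_hi coeff_eq_0)

lemma step:
  fixes q r :: "real poly" and \<sigma> :: real
  assumes sig: "\<sigma> = 1 \<or> \<sigma> = -1"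
    and degr: "degree r \<le> t"
    and G: "Good t B (2^(\<theta>+L)) q Ah"
    and tB: "t \<le> B" and tth: "t \<le> \<theta>" and BB: "B + 2^\<theta> \<le> B'" and BS: "B' < 2^(\<theta>+L)"
    and hcl: "q \<noteq> r \<longrightarrow> hmult (q - r) \<le> \<theta> \<or> \<theta> + L < hmult (q - r)"
  shows "(q \<noteq> r \<longrightarrow> hmult (q - r) \<le> B) \<and>
         (\<exists>Ah'. Good t B' (2^(\<theta>+L)) (q + r + smult \<sigma> ((q - r) * monom 1 (2 ^ hmult (q - r)))) Ah')"
proof -
  define S :: nat where "S = 2^(\<theta>+L)"
  define h where "h = hmult (q - r)"
  define s :: nat where "s = 2 ^ h"
  define A where "A = hi t q"
  define q' where "q' = q + r + smult \<sigma> ((q - r) * monom 1 s)"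
  have s1: "1 \<le> s" unfolding s_def by simp
  have Gs: "\<forall>i. coeff Ah i \<noteq> 0 \<longrightarrow> t < i \<and> i \<le> B"
    and Ga: "\<forall>i < t + 1 + S. coeff A i = coeff Ah i"
    and Gz: "Ah = 0 \<longrightarrow> A = 0" using G unfolding Good_def A_def S_def by auto
  have rz: "\<And>i. t < i \<Longrightarrow> coeff r i = 0" using degr coeff_deg by blast
  have cA: "\<And>i. coeff A i = (if i \<le> t then 0 else coeff q i)" unfolding A_def coeff_hi by simp
  have cA': "\<And>i. coeff (hi t q') i = (if i \<le> t then 0 else
        coeff A i + \<sigma> * (if s \<le> i then coeff A (i - s) + coeff (lo t q - r) (i - s) else 0))"
  proof -
    fix i
    show "coeff (hi t q') i = (if i \<le> t then 0 else
        coeff A i + \<sigma> * (if s \<le> i then coeff A (i - s) + coeff (lo t q - r) (i - s) else 0))"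
      unfolding q'_def coeff_hi
      by (auto simp: coeff_y cA coeff_lo rz algebra_simps)
  qed
  have BSl: "B < t + 1 + S" using BB BS unfolding S_def by simp
  show ?thesis
  proof (cases "q = r")
    case True
    have A0: "A = 0" unfolding A_def using True degr hi_zero by simp
    have q'2: "q' = q + q" unfolding q'_def using True by simp
    have A'0: "hi t q' = 0" unfolding q'2
      by (intro hi_zero degree_add_le) (use True degr in auto)
    have "Good t B' S q' Ah"
      unfolding Good_def using Gs Ga A0 A'0 BB by (auto simp: A'0)
    then show ?thesis using True unfolding q'_def s_def h_def S_def by auto
  next
    case False
    have d0: "q - r \<noteq> 0" using False by simp
    have hle: "h \<le> B"
    proof (cases "h \<le> t")
      case True then show ?thesis using tB by simp
    next
      case hgt: False
      have low: "\<And>i. i \<le> t \<Longrightarrow> coeff (q - r) i = 0"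
        using order0_low[OF d0] hgt unfolding h_def hmult_def by auto
      have dA: "q - r = A"
      proof (rule poly_eqI)
        fix i show "coeff (q - r) i = coeff A i"
        proof (cases "i \<le> t")
          case True then show ?thesis using low cA by simp
        next
          case False then show ?thesis using rz cA by simp
        qed
      qed
      have A0: "A \<noteq> 0" using d0 dA by simp
      have Ah0: "Ah \<noteq> 0" using A0 Gz by blast
      show ?thesis
      proof (rule ccontr)
        assume "\<not> h \<le> B"
        then have hB: "B < order 0 A" unfolding h_def hmult_def dA by simp
        have "\<forall>i. coeff Ah i = 0"
        proof (rule allI, rule ccontr)
          fix i assume nz: "coeff Ah i \<noteq> 0"
          then have i1: "t < i" "i \<le> B" using Gs by auto
          then have "i < t + 1 + S" using BSl by simp
          then have "coeff A i = coeff Ah i" using Ga by simp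
          moreover have "coeff A i = 0" using order0_low[OF A0] i1 hB by simp
          ultimately show False using nz by simp
        qed
        then show False using Ah0 by (simp add: poly_eq_iff)
      qed
    qed
    have hc: "h \<le> \<theta> \<or> \<theta> + L < h" using hcl False unfolding h_def by simp
    show ?thesis
    proof (cases "h \<le> \<theta>")
      case True
      define Ah' where "Ah' = Ah + smult \<sigma> (Ah * monom 1 s) + smult \<sigma> (hi t ((lo t q - r) * monom 1 s))"
      have sth: "s \<le> 2^\<theta>" unfolding s_def using True by simp
      have cAh': "\<And>i. coeff Ah' i = coeff Ah i + \<sigma> * (if s \<le> i then coeff Ah (i - s) else 0)
            + \<sigma> * (if i \<le> t then 0 else if s \<le> i then coeff (lo t q - r) (i - s) else 0)"
        unfolding Ah'_def by (simp add: coeff_y coeff_hi)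
      have lr: "\<And>j. t < j \<Longrightarrow> coeff (lo t q - r) j = 0" by (simp add: coeff_lo rz)
      have sup: "\<forall>i. coeff Ah' i \<noteq> 0 \<longrightarrow> t < i \<and> i \<le> B'"
      proof (intro allI impI)
        fix i assume nz: "coeff Ah' i \<noteq> 0"
        have c1: "coeff Ah i \<noteq> 0 \<Longrightarrow> t < i \<and> i \<le> B'" using Gs BB by fastforce
        have c2: "s \<le> i \<Longrightarrow> coeff Ah (i - s) \<noteq> 0 \<Longrightarrow> t < i \<and> i \<le> B'"
          using Gs[rule_format, of "i - s"] BB sth by auto
        have c3: "\<not> i \<le> t \<Longrightarrow> s \<le> i \<Longrightarrow> coeff (lo t q - r) (i - s) \<noteq> 0 \<Longrightarrow> t < i \<and> i \<le> B'"
        proof -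
          assume a1: "\<not> i \<le> t" and a2: "s \<le> i" and a3: "coeff (lo t q - r) (i - s) \<noteq> 0"
          have "i - s \<le> t" using lr[of "i - s"] a3 by (meson not_le)
          then have "i \<le> t + s" using a2 by simp
          then show "t < i \<and> i \<le> B'" using a1 BB sth tB by simp
        qed
        have "coeff Ah i \<noteq> 0 \<or> (s \<le> i \<and> coeff Ah (i - s) \<noteq> 0) \<or>
              (\<not> i \<le> t \<and> s \<le> i \<and> coeff (lo t q - r) (i - s) \<noteq> 0)" (is ?D)
        proof (rule ccontr)
          assume "\<not> ?D"
          then have "coeff Ah' i = 0" unfolding cAh' by auto
          then show False using nz by simp
        qed
        then show "t < i \<and> i \<le> B'" using c1 c2 c3 by blast
      qed
      have agr: "\<forall>i < t + 1 + S. coeff (hi t q') i = coeff Ah' i"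
      proof (intro allI impI)
        fix i assume i: "i < t + 1 + S"
        have e1: "coeff A i = coeff Ah i" using Ga i by simp
        have e2: "s \<le> i \<Longrightarrow> coeff A (i - s) = coeff Ah (i - s)" using Ga i by simp
        have e0: "i \<le> t \<Longrightarrow> coeff Ah i = 0" using Gs by force
        have e0': "s \<le> i \<Longrightarrow> i \<le> t \<Longrightarrow> coeff Ah (i - s) = 0" using Gs by force
        show "coeff (hi t q') i = coeff Ah' i"
          unfolding cA' cAh' using e1 e2 e0 e0' by (auto simp: algebra_simps)
      qed
      have nv: "Ah' = 0 \<longrightarrow> hi t q' = 0"
      proof (cases "Ah = 0")
        case True
        then have "A = 0" using Gz by simp
        then have "hi t q' = Ah'" using True
          by (simp add: poly_eq_iff cA' cAh' algebra_simps)
        then show ?thesis by simp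
      next
        case False
        define D where "D = degree Ah"
        have lc: "coeff Ah D \<noteq> 0" using False unfolding D_def by simp
        have Dt: "t < D" using Gs lc by blast
        have "coeff Ah' (D + s) = \<sigma> * coeff Ah D"
          unfolding cAh' using s1 Dt lr[of D]
          by (simp add: D_def coeff_eq_0)
        then have "coeff Ah' (D + s) \<noteq> 0" using lc sig by auto
        then show ?thesis by auto
      qed
      have "Good t B' S q' Ah'" unfolding Good_def using sup agr nv by blast
      then show ?thesis using hle unfolding q'_def s_def h_def S_def by auto
    next
      case hbig: False
      then have hgt: "\<theta> + L < h" using hc by simp
      have ht: "t < h" using hgt tth by simp
      have low: "\<And>i. i \<le> t \<Longrightarrow> coeff (q - r) i = 0"
        using order0_low[OF d0] ht unfolding h_def hmult_def by auto
      have lr0: "\<And>j. coeff (lo t q - r) j = 0"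
      proof -
        fix j show "coeff (lo t q - r) j = 0"
        proof (cases "j \<le> t")
          case True then show ?thesis using low[OF True] by (simp add: coeff_lo)
        next
          case False then show ?thesis using rz by (simp add: coeff_lo)
        qed
      qed
      have Ss: "S < s" unfolding S_def s_def using hgt by simp
      have agr: "\<forall>i < t + 1 + S. coeff (hi t q') i = coeff Ah i"
      proof (intro allI impI)
        fix i assume i: "i < t + 1 + S"
        have z: "s \<le> i \<Longrightarrow> coeff A (i - s) = 0" using i Ss cA by auto
        have e1: "coeff A i = coeff Ah i" using Ga i by simp
        have e0: "i \<le> t \<Longrightarrow> coeff Ah i = 0" using Gs by force
        show "coeff (hi t q') i = coeff Ah i"
          unfolding cA' using z e1 e0 lr0 by simp
      qed
      have nv: "Ah = 0 \<longrightarrow> hi t q' = 0"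
      proof
        assume "Ah = 0"
        then have "A = 0" using Gz by simp
        then show "hi t q' = 0" using lr0 by (simp add: poly_eq_iff cA')
      qed
      have sup: "\<forall>i. coeff Ah i \<noteq> 0 \<longrightarrow> t < i \<and> i \<le> B'" using Gs BB by fastforce
      have "Good t B' S q' Ah" unfolding Good_def using sup agr nv by blast
      then show ?thesis using hle unfolding q'_def s_def h_def S_def by auto
    qed
  qed
qed

fun chain :: "nat \<Rightarrow> btree \<Rightarrow> bool" where
  "chain K (Leaf p) = True"
| "chain K (Node l r) = ((\<not> big K l \<and> chain K r) \<or> (\<not> big K r \<and> chain K l))"

fun spineH :: "nat \<Rightarrow> btree \<Rightarrow> nat set" where
  "spineH K (Leaf p) = {}"
| "spineH K (Node l r) = (if tpoly l \<noteq> tpoly r then {hmult (tpoly l - tpoly r)} else {}) \<union>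
     (if \<not> big K l \<and> chain K r then spineH K r else spineH K l)"

lemma spineH_fin: "finite (spineH K T)"
  by (induction T) auto

lemma spineH_card: "card (spineH K T) \<le> num_nodes T"
proof (induction T)
  case (Leaf p) then show ?case by simp
next
  case (Node l r)
  let ?X = "(if tpoly l \<noteq> tpoly r then {hmult (tpoly l - tpoly r)} else {})"
  let ?Y = "(if \<not> big K l \<and> chain K r then spineH K r else spineH K l)"
  have "card ?X \<le> 1" by simp
  moreover have "card ?Y \<le> num_nodes l + num_nodes r" using Node by auto
  moreover have "card (?X \<union> ?Y) \<le> card ?X + card ?Y" by (rule card_Un_le)
  ultimately show ?case by simp
qed

lemma notbig_h: "\<not> big K T \<Longrightarrow> Node l r \<in> subtrees T \<Longrightarrow> tpoly l \<noteq> tpoly r \<Longrightarrow> hmult (tpoly l - tpoly r) < K"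
  unfolding big_def by (meson not_le)

lemma chain_nodes: "chain K T \<Longrightarrow> Node l r \<in> subtrees T \<Longrightarrow> tpoly l \<noteq> tpoly r \<Longrightarrow>
    hmult (tpoly l - tpoly r) < K \<or> hmult (tpoly l - tpoly r) \<in> spineH K T"
proof (induction T)
  case (Leaf p) then show ?case by simp
next
  case (Node a b)
  show ?case
  proof (cases "Node l r = Node a b")
    case True then show ?thesis using Node.prems by auto
  next
    case False
    then have sub: "Node l r \<in> subtrees a \<or> Node l r \<in> subtrees b" using Node.prems by auto
    show ?thesis
    proof (cases "\<not> big K a \<and> chain K b")
      case True
      then show ?thesis using sub Node.IH(2) Node.prems notbig_h by auto
    next
      case F: False
      then have "\<not> big K b \<and> chain K a" using Node.prems by auto
      then show ?thesis using F sub Node.IH(1) Node.prems notbig_h by auto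
    qed
  qed
qed

lemma notchain: "\<not> chain K T \<Longrightarrow> \<exists>l r. Node l r \<in> subtrees T \<and> big K l \<and> big K r"
proof (induction T)
  case (Leaf p) then show ?case by simp
next
  case (Node a b)
  show ?case
  proof (cases "big K a \<and> big K b")
    case True then show ?thesis by auto
  next
    case False
    then show ?thesis using Node by auto
  qed
qed

lemma hmult_swap: "hmult (p - q) = hmult (q - p)"
proof -
  have "p - q = - (q - p)" by simp
  then show ?thesis unfolding hmult_def by (metis order_uminus)
qed

lemma tpoly_swap:
  "tpoly (Node l r) = tpoly r + tpoly l + smult (-1) ((tpoly r - tpoly l) * monom 1 (2 ^ hmult (tpoly r - tpoly l)))"
  by (simp add: oplus_def hmult_swap[of "tpoly l"] algebra_simps)

lemma tpoly_noswap:
  "tpoly (Node l r) = tpoly l + tpoly r + smult 1 ((tpoly l - tpoly r) * monom 1 (2 ^ hmult (tpoly l - tpoly r)))"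
  by (simp add: oplus_def)

lemma spine_inv:
  assumes P1: "N * 2^K \<le> t" and P2: "t \<le> \<theta>" and P3: "t + 2^t + N * 2^\<theta> < (2::nat)^(\<theta>+L)"
  shows "leaves_deg1 T \<Longrightarrow> chain K T \<Longrightarrow> num_nodes T \<le> N \<Longrightarrow> (\<forall>h\<in>spineH K T. h \<le> \<theta> \<or> \<theta> + L < h) \<Longrightarrow>
    (\<forall>h\<in>spineH K T. h \<le> t + 2^t + num_nodes T * 2^\<theta>) \<and>
    (\<exists>Ah. Good t (t + 2^t + num_nodes T * 2^\<theta>) (2^(\<theta>+L)) (tpoly T) Ah)"
proof (induction T)
  case (Leaf p)
  have "1 \<le> N" using Leaf by simp
  then have "1 \<le> N * 2^K" by simp
  then have "1 \<le> t" using P1 by (rule order_trans)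
  then have "hi t p = 0" using Leaf by (intro hi_zero) simp
  then have "Good t (t + 2^t + num_nodes (Leaf p) * 2^\<theta>) (2^(\<theta>+L)) (tpoly (Leaf p)) 0"
    unfolding Good_def by simp
  then show ?case by auto
next
  case (Node l r)
  define n where "n = num_nodes (Node l r)"
  define B' where "B' = t + 2^t + n * 2^\<theta>"
  have "num_nodes (Node l r) * 2^\<theta> \<le> N * 2^\<theta>" using Node.prems(3) by (rule mult_le_mono1)
  then have B'S: "B' < 2^(\<theta>+L)" unfolding B'_def n_def using P3 by linarith
  show ?case
  proof (cases "\<not> big K l \<and> chain K r")
    case True
    have sH: "spineH K (Node l r) = (if tpoly l \<noteq> tpoly r then {hmult (tpoly l - tpoly r)} else {}) \<union> spineH K r"
      using True by simp
    define B where "B = t + 2^t + num_nodes r * 2^\<theta>"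
    have IH: "(\<forall>h\<in>spineH K r. h \<le> B) \<and> (\<exists>Ah. Good t B (2^(\<theta>+L)) (tpoly r) Ah)"
      unfolding B_def using Node.IH(2) Node.prems True sH by auto
    then obtain Ah where G: "Good t B (2^(\<theta>+L)) (tpoly r) Ah" by blast
    have degl: "degree (tpoly l) \<le> t"
    proof -
      have "degree (tpoly l) \<le> num_nodes l * 2^K" by (rule deg_notbig) (use True Node.prems in auto)
      moreover have "num_nodes l * 2^K \<le> N * 2^K" using Node.prems(3) by (intro mult_le_mono1) simp
      ultimately show ?thesis using P1 by (meson order_trans)
    qed
    have BB: "B + 2^\<theta> \<le> B'" unfolding B_def B'_def n_def by (simp add: algebra_simps)
    have tB: "t \<le> B" unfolding B_def by simp
    have hcl: "tpoly r \<noteq> tpoly l \<longrightarrow> hmult (tpoly r - tpoly l) \<le> \<theta> \<or> \<theta> + L < hmult (tpoly r - tpoly l)"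
      using Node.prems(4) sH hmult_swap[of "tpoly l" "tpoly r"] by auto
    have st: "(tpoly r \<noteq> tpoly l \<longrightarrow> hmult (tpoly r - tpoly l) \<le> B) \<and>
         (\<exists>Ah'. Good t B' (2^(\<theta>+L)) (tpoly r + tpoly l + smult (-1) ((tpoly r - tpoly l) * monom 1 (2 ^ hmult (tpoly r - tpoly l)))) Ah')"
      by (rule step[OF _ degl G tB P2 BB B'S hcl]) simp
    have "\<forall>h\<in>spineH K (Node l r). h \<le> B'"
    proof
      fix h assume hm: "h \<in> spineH K (Node l r)"
      then have "(tpoly l \<noteq> tpoly r \<and> h = hmult (tpoly l - tpoly r)) \<or> h \<in> spineH K r"
        unfolding sH by (auto split: if_splits)
      then show "h \<le> B'"
      proof
        assume a: "tpoly l \<noteq> tpoly r \<and> h = hmult (tpoly l - tpoly r)"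
        then have "h = hmult (tpoly r - tpoly l)" using hmult_swap[of "tpoly l" "tpoly r"] by simp
        moreover have "tpoly r \<noteq> tpoly l" using a by simp
        ultimately have "h \<le> B" using st by simp
        then show "h \<le> B'" using BB by simp
      next
        assume "h \<in> spineH K r"
        then have "h \<le> B" using IH by blast
        then show "h \<le> B'" using BB by simp
      qed
    qed
    moreover obtain Ah' where "Good t B' (2^(\<theta>+L)) (tpoly r + tpoly l + smult (-1) ((tpoly r - tpoly l) * monom 1 (2 ^ hmult (tpoly r - tpoly l)))) Ah'"
      using st by blast
    then have "Good t B' (2^(\<theta>+L)) (tpoly (Node l r)) Ah'" unfolding tpoly_swap[of l r] .
    ultimately show ?thesis unfolding B'_def n_def by blast
  next
    case False
    then have F2: "\<not> big K r \<and> chain K l" using Node.prems by auto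
    have sH: "spineH K (Node l r) = (if tpoly l \<noteq> tpoly r then {hmult (tpoly l - tpoly r)} else {}) \<union> spineH K l"
      by (simp only: spineH.simps if_not_P[OF False])
    define B where "B = t + 2^t + num_nodes l * 2^\<theta>"
    have IH: "(\<forall>h\<in>spineH K l. h \<le> B) \<and> (\<exists>Ah. Good t B (2^(\<theta>+L)) (tpoly l) Ah)"
      unfolding B_def using Node.IH(1) Node.prems F2 sH by auto
    then obtain Ah where G: "Good t B (2^(\<theta>+L)) (tpoly l) Ah" by blast
    have degr: "degree (tpoly r) \<le> t"
    proof -
      have "degree (tpoly r) \<le> num_nodes r * 2^K" by (rule deg_notbig) (use F2 Node.prems in auto)
      moreover have "num_nodes r * 2^K \<le> N * 2^K" using Node.prems(3) by (intro mult_le_mono1) simp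
      ultimately show ?thesis using P1 by (meson order_trans)
    qed
    have BB: "B + 2^\<theta> \<le> B'" unfolding B_def B'_def n_def by (simp add: algebra_simps)
    have tB: "t \<le> B" unfolding B_def by simp
    have hcl: "tpoly l \<noteq> tpoly r \<longrightarrow> hmult (tpoly l - tpoly r) \<le> \<theta> \<or> \<theta> + L < hmult (tpoly l - tpoly r)"
      using Node.prems(4) sH by auto
    have st: "(tpoly l \<noteq> tpoly r \<longrightarrow> hmult (tpoly l - tpoly r) \<le> B) \<and>
         (\<exists>Ah'. Good t B' (2^(\<theta>+L)) (tpoly l + tpoly r + smult 1 ((tpoly l - tpoly r) * monom 1 (2 ^ hmult (tpoly l - tpoly r)))) Ah')"
      by (rule step[OF _ degr G tB P2 BB B'S hcl]) simp
    have "\<forall>h\<in>spineH K (Node l r). h \<le> B'"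
    proof
      fix h assume hm: "h \<in> spineH K (Node l r)"
      then have "(tpoly l \<noteq> tpoly r \<and> h = hmult (tpoly l - tpoly r)) \<or> h \<in> spineH K l"
        unfolding sH by (auto split: if_splits)
      then show "h \<le> B'"
      proof
        assume a: "tpoly l \<noteq> tpoly r \<and> h = hmult (tpoly l - tpoly r)"
        then have "h \<le> B" using st by simp
        then show "h \<le> B'" using BB by simp
      next
        assume "h \<in> spineH K l"
        then have "h \<le> B" using IH by blast
        then show "h \<le> B'" using BB by simp
      qed
    qed
    moreover obtain Ah' where "Good t B' (2^(\<theta>+L)) (tpoly l + tpoly r + smult 1 ((tpoly l - tpoly r) * monom 1 (2 ^ hmult (tpoly l - tpoly r)))) Ah'"
      using st by blast
    then have "Good t B' (2^(\<theta>+L)) (tpoly (Node l r)) Ah'" unfolding tpoly_noswap[of l r] .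
    ultimately show ?thesis unfolding B'_def n_def by blast
  qed
qed

lemma pigeon:
  fixes H :: "nat set"
  assumes fin: "finite H" and card: "card H \<le> N" and L: "0 < L"
  shows "\<exists>i\<le>N. \<forall>h\<in>H. h \<le> t + i*L \<or> t + i*L + L < h"
proof (rule ccontr)
  assume nt: "\<not> ?thesis"
  have ex: "\<forall>i\<le>N. \<exists>h\<in>H. t + i*L < h \<and> h \<le> t + i*L + L"
  proof (intro allI impI)
    fix i assume i: "i \<le> N"
    have "\<not> (\<forall>h\<in>H. h \<le> t + i*L \<or> t + i*L + L < h)" using nt i by blast
    then obtain h where h: "h \<in> H" "\<not> h \<le> t + i*L" "\<not> t + i*L + L < h" by blast
    from h(2) have "t + i*L < h" by (simp only: not_le)
    moreover from h(3) have "h \<le> t + i*L + L" by (simp only: not_less)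
    ultimately show "\<exists>h\<in>H. t + i*L < h \<and> h \<le> t + i*L + L" using h(1) by blast
  qed
  define f where "f i = (SOME h. h \<in> H \<and> t + i*L < h \<and> h \<le> t + i*L + L)" for i
  have fP: "f i \<in> H \<and> t + i*L < f i \<and> f i \<le> t + i*L + L" if "i \<le> N" for i
  proof -
    from ex[rule_format, OF that] obtain h where h: "h \<in> H" "t + i*L < h" "h \<le> t + i*L + L"
      by blast
    have "h \<in> H \<and> t + i*L < h \<and> h \<le> t + i*L + L" using h by blast
    then have "(SOME h. h \<in> H \<and> t + i*L < h \<and> h \<le> t + i*L + L) \<in> H \<and>
       t + i*L < (SOME h. h \<in> H \<and> t + i*L < h \<and> h \<le> t + i*L + L) \<and>
       (SOME h. h \<in> H \<and> t + i*L < h \<and> h \<le> t + i*L + L) \<le> t + i*L + L"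
      by (rule someI)
    then show ?thesis unfolding f_def .
  qed
  have lt: "f i < f j" if "i \<le> N" "j \<le> N" "i < j" for i j
  proof -
    have "Suc i \<le> j" using that by simp
    then have "Suc i * L \<le> j * L" by (rule mult_le_mono1)
    then have "t + i*L + L \<le> t + j*L" by simp
    then have "f i \<le> t + j*L" using fP[OF that(1)] by (meson order_trans)
    then show ?thesis using fP[OF that(2)] by (meson order_le_less_trans)
  qed
  have inj: "inj_on f {..N}"
  proof (rule inj_onI)
    fix i j assume "i \<in> {..N}" "j \<in> {..N}" "f i = f j"
    then have ij: "i \<le> N" "j \<le> N" "f i = f j" by auto
    show "i = j"
    proof (rule ccontr)
      assume "i \<noteq> j"
      then have "i < j \<or> j < i" by (rule nat_neq_iff[THEN iffD1])
      then show False
      proof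
        assume "i < j" then have "f i < f j" using lt ij by blast
        then show False using ij by simp
      next
        assume "j < i" then have "f j < f i" using lt ij by blast
        then show False using ij by simp
      qed
    qed
  qed
  have "f ` {..N} \<subseteq> H" using fP by auto
  then have "card {..N} \<le> card H" by (rule card_inj_on_le[OF inj _ fin])
  then show False using card by simp
qed

definition Bnd :: "nat \<Rightarrow> nat \<Rightarrow> nat" where
  "Bnd K N = K + N * 2^K + 2^(N * 2^K) + N * 2^(N * 2^K + N * (N + 2))"

lemma P3_lemma:
  fixes t \<theta> N :: nat
  assumes "t \<le> \<theta>"
  shows "t + 2^t + N * 2^\<theta> < 2^(\<theta> + (N + 2))"
proof -
  have "t < 2^t" by (rule less_exp)
  moreover have "(2::nat)^t \<le> 2^\<theta>" using assms by simp
  ultimately have a: "t + 2^t < 2 * 2^\<theta>" by linarith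
  have "N + 2 < 2^(N+2)" by (rule less_exp)
  then have "N + 3 \<le> (2::nat)^(N+2)" by simp
  then have b: "(N + 3) * 2^\<theta> \<le> 2^(N+2) * 2^\<theta>" by (rule mult_le_mono1)
  have "t + 2^t + N * 2^\<theta> < 2 * 2^\<theta> + N * 2^\<theta>" using a by simp
  also have "\<dots> < (N + 3) * 2^\<theta>" by (simp add: algebra_simps)
  also have "\<dots> \<le> 2^(\<theta> + (N + 2))" using b by (simp add: power_add mult.commute)
  finally show ?thesis .
qed

lemma chain_bound:
  assumes d: "leaves_deg1 T" and ch: "chain K T" and sub: "Node l r \<in> subtrees T"
    and ne: "tpoly l \<noteq> tpoly r"
  shows "hmult (tpoly l - tpoly r) \<le> Bnd K (num_nodes T)"
proof -
  define N where "N = num_nodes T"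
  define t where "t = N * 2^K"
  define L where "L = N + 2"
  have L0: "0 < L" unfolding L_def by simp
  have "\<exists>i\<le>N. \<forall>h\<in>spineH K T. h \<le> t + i*L \<or> t + i*L + L < h"
    using pigeon[OF spineH_fin spineH_card[of K T] L0, where t=t] unfolding N_def .
  then obtain i where i: "i \<le> N" and ih: "\<forall>h\<in>spineH K T. h \<le> t + i*L \<or> t + i*L + L < h"
    by blast
  define \<theta> where "\<theta> = t + i * L"
  have P2: "t \<le> \<theta>" unfolding \<theta>_def by simp
  have P3: "t + 2^t + N * 2^\<theta> < 2^(\<theta> + L)" unfolding L_def by (rule P3_lemma[OF P2])
  have P1: "N * 2^K \<le> t" unfolding t_def by simp
  have spb: "\<forall>h\<in>spineH K T. h \<le> t + 2^t + num_nodes T * 2^\<theta>"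
    using spine_inv[OF P1 P2 P3, of T] d ch ih unfolding N_def \<theta>_def by auto
  have "i * L \<le> N * L" using i by (rule mult_le_mono1)
  then have "\<theta> \<le> t + N * (N + 2)" unfolding \<theta>_def L_def by simp
  then have "(2::nat)^\<theta> \<le> 2^(t + N * (N + 2))" by simp
  then have nm: "N * 2^\<theta> \<le> N * 2^(t + N * (N + 2))" by simp
  have spb2: "\<forall>h\<in>spineH K T. h \<le> t + 2^t + N * 2^(t + N * (N + 2))"
  proof
    fix h assume "h \<in> spineH K T"
    then have "h \<le> t + 2^t + N * 2^\<theta>" using spb unfolding N_def by blast
    also have "\<dots> \<le> t + 2^t + N * 2^(t + N * (N + 2))" using nm by simp
    finally show "h \<le> t + 2^t + N * 2^(t + N * (N + 2))" .
  qed
  have "hmult (tpoly l - tpoly r) < K \<or> hmult (tpoly l - tpoly r) \<in> spineH K T"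
    using chain_nodes[OF ch sub ne] .
  then show ?thesis
  proof
    assume "hmult (tpoly l - tpoly r) < K" then show ?thesis unfolding Bnd_def by simp
  next
    assume "hmult (tpoly l - tpoly r) \<in> spineH K T"
    then have "hmult (tpoly l - tpoly r) \<le> t + 2^t + N * 2^(t + N * (N + 2))" using spb2 by blast
    then show ?thesis unfolding Bnd_def t_def N_def by simp
  qed
qed

lemma Bnd_mono: "N \<le> M \<Longrightarrow> Bnd K N \<le> Bnd K M"
proof -
  assume a: "N \<le> M"
  have 1: "N * 2^K \<le> M * 2^K" using a by simp
  have 2: "(2::nat)^(N * 2^K) \<le> 2^(M * 2^K)" using 1 by simp
  have 4: "N * (N + 2) \<le> M * (M + 2)" using a by (intro mult_le_mono) auto
  have "N * 2^K + N * (N + 2) \<le> M * 2^K + M * (M + 2)" by (rule add_le_mono[OF 1 4])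
  then have "(2::nat)^(N * 2^K + N * (N + 2)) \<le> 2^(M * 2^K + M * (M + 2))" by simp
  then have 3: "N * 2^(N * 2^K + N * (N + 2)) \<le> M * 2^(M * 2^K + M * (M + 2))"
    using a by (intro mult_le_mono) auto
  show ?thesis unfolding Bnd_def by (intro add_le_mono order_refl 1 2 3)
qed

fun thr :: "nat \<Rightarrow> nat" where
  "thr 0 = 0"
| "thr (Suc j) = Bnd (thr j) (2^(Suc j)) + 1"

lemma size_big: "leaves_deg1 T \<Longrightarrow> big (thr j) T \<Longrightarrow> 2^j \<le> num_nodes T"
proof (induction j arbitrary: T)
  case 0 then show ?case using num_nodes_pos by simp
next
  case (Suc j)
  show ?case
  proof (rule ccontr)
    assume "\<not> 2 ^ Suc j \<le> num_nodes T"
    then have nlt: "num_nodes T < 2 ^ Suc j" by simp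
    show False
    proof (cases "chain (thr j) T")
      case True
      obtain l r where lr: "Node l r \<in> subtrees T" "tpoly l \<noteq> tpoly r"
          "thr (Suc j) \<le> hmult (tpoly l - tpoly r)"
        using Suc.prems(2) unfolding big_def by blast
      have "hmult (tpoly l - tpoly r) \<le> Bnd (thr j) (num_nodes T)"
        using chain_bound[OF Suc.prems(1) True lr(1) lr(2)] .
      also have "\<dots> \<le> Bnd (thr j) (2^Suc j)" using nlt by (intro Bnd_mono) simp
      finally show False using lr(3) by simp
    next
      case False
      obtain l r where lr: "Node l r \<in> subtrees T" "big (thr j) l" "big (thr j) r"
        using notchain[OF False] by blast
      have dl: "leaves_deg1 (Node l r)" using subtrees_deg1[OF lr(1) Suc.prems(1)] .
      have "2^j \<le> num_nodes l" using Suc.IH[of l] dl lr(2) by simp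
      moreover have "2^j \<le> num_nodes r" using Suc.IH[of r] dl lr(3) by simp
      moreover have "num_nodes (Node l r) \<le> num_nodes T" using subtrees_num[OF lr(1)] .
      ultimately show False using nlt by simp
    qed
  qed
qed

lemma tower_ge: "k + 1 \<le> tower k"
proof (induction k)
  case 0 then show ?case by simp
next
  case (Suc k)
  have "tower k < 2 ^ tower k" by (rule less_exp)
  then have "Suc k + 1 \<le> 2 ^ tower k" using Suc.IH by linarith
  then show ?case by simp
qed

lemma tower_step: "tower k \<le> tower (Suc k)"
  using less_exp[of "tower k"] by simp

lemma tower_mono: "m \<le> n \<Longrightarrow> tower m \<le> tower n"
  by (rule lift_Suc_mono_le[of tower, OF tower_step])

lemma two_lin: "4 \<le> T \<Longrightarrow> 2 * T + 3 \<le> (2::nat) ^ T"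
proof (induction T rule: dec_induct)
  case base then show ?case by simp
next
  case (step T)
  then show ?case by simp
qed

lemma num_lemma:
  fixes K N T0 :: nat
  assumes T4: "4 \<le> T0" and KT: "K \<le> T0" and NT: "N \<le> 2^T0"
  shows "Bnd K N + 1 \<le> 2^(2^(2^(2^T0)))"
proof -
  define t where "t = N * 2^K"
  define E where "E = t + N * (N + 2)"
  define X where "X = 2 * T0 + 2"
  define P :: nat where "P = 2^(T0 + 2^X)"
  have "(2::nat)^K \<le> 2^T0" using KT by simp
  then have "t \<le> 2^T0 * 2^T0" unfolding t_def using NT by (intro mult_le_mono) auto
  moreover have "(2::nat)^(2*T0) = 2^T0 * 2^T0" by (simp only: mult_2 power_add)
  ultimately have t1: "t \<le> 2^(2*T0)" by simp
  have "(2::nat)^1 \<le> 2^T0" by (rule power_increasing) (use T4 in simp_all)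
  then have "(2::nat) \<le> 2^T0" by simp
  then have "N + 2 \<le> 2^T0 + 2^T0" using NT by simp
  then have "N * (N + 2) \<le> 2^T0 * (2^T0 + 2^T0)" using NT by (intro mult_le_mono) auto
  moreover have "(2::nat)^(2*T0+1) = 2^T0 * (2^T0 + 2^T0)"
    by (simp only: mult_2 power_add power_one_right distrib_left)
  ultimately have n2: "N * (N + 2) \<le> 2^(2*T0+1)" by simp
  have "E \<le> 2^(2*T0) + 2^(2*T0+1)" unfolding E_def using t1 n2 by (rule add_le_mono)
  then have E1: "E \<le> 2^X" unfolding X_def by (simp add: power_add)
  have xlt: "\<And>x::nat. x < 2^x" by (rule less_exp)
  have Pge: "2^T0 \<le> P" unfolding P_def by simp
  have a1: "K \<le> P" using KT xlt[of T0] Pge by linarith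
  have "2*T0 \<le> T0 + 2^X" using xlt[of X] unfolding X_def by linarith
  then have "(2::nat)^(2*T0) \<le> P" unfolding P_def by simp
  then have a2: "t \<le> P" using t1 by simp
  have p2: "(2::nat)^(2*T0) \<le> 2^X" unfolding X_def by simp
  have "t \<le> T0 + 2^X" using t1 p2 by linarith
  then have a3: "2^t \<le> P" unfolding P_def by simp
  have "N * 2^E \<le> 2^T0 * 2^(2^X)" using NT E1 by (intro mult_le_mono) auto
  then have a4: "N * 2^E \<le> P" unfolding P_def by (simp add: power_add)
  have "Bnd K N + 1 = K + t + 2^t + N * 2^E + 1" unfolding Bnd_def t_def E_def by simp
  also have "\<dots> \<le> P + P + P + P + P"
  proof -
    have p1: "1 \<le> P" unfolding P_def by simp
    show ?thesis using a1 a2 a3 a4 p1 by linarith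
  qed
  also have "\<dots> \<le> 2^3 * P" by simp
  also have "\<dots> = 2^(T0 + 2^X + 3)" unfolding P_def by (simp add: power_add)
  finally have B1: "Bnd K N + 1 \<le> 2^(T0 + 2^X + 3)" .
  have "T0 + 3 \<le> X" unfolding X_def using T4 by simp
  then have "T0 + 3 \<le> 2^X" using xlt[of X] by linarith
  then have "T0 + 2^X + 3 \<le> 2^(Suc X)" by simp
  also have "Suc X = 2 * T0 + 3" unfolding X_def by simp
  also have "(2::nat)^(2 * T0 + 3) \<le> 2^(2^T0)" using two_lin[OF T4] by simp
  also have "(2::nat)^(2^T0) \<le> 2^(2^(2^T0))" using xlt[of "2^T0"] by simp
  finally have "T0 + 2^X + 3 \<le> 2^(2^(2^T0))" .
  then have B2: "(2::nat)^(T0 + 2^X + 3) \<le> 2^(2^(2^(2^T0)))" by (rule power_increasing) simp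
  show ?thesis by (rule le_trans[OF B1 B2])
qed

lemma tower4: "4 \<le> tower (4*j+2)"
proof -
  have "tower 2 \<le> tower (4*j+2)" by (rule tower_mono) simp
  then show ?thesis by (simp add: numeral_eq_Suc)
qed

lemma thr_bound: "thr j \<le> tower (4*j+2)"
proof (induction j)
  case 0 then show ?case by simp
next
  case (Suc j)
  define T0 where "T0 = tower (4*j+2)"
  have T4: "4 \<le> T0" unfolding T0_def by (rule tower4)
  have "4*j+2+1 \<le> T0" unfolding T0_def by (rule tower_ge)
  then have "Suc j \<le> T0" by simp
  then have NT: "(2::nat)^(Suc j) \<le> 2^T0" by (rule power_increasing) simp
  have "thr (Suc j) \<le> 2^(2^(2^(2^T0)))"
    using num_lemma[OF T4 Suc.IH[folded T0_def] NT] by simp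
  also have "\<dots> = tower (4 * Suc j + 2)" unfolding T0_def by (simp add: numeral_eq_Suc)
  finally show ?case .
qed

lemma nat_ceil: "real k \<le> x \<Longrightarrow> k \<le> nat \<lceil>x\<rceil>"
proof -
  assume a: "real k \<le> x"
  have c: "x \<le> of_int \<lceil>x\<rceil>" by (rule le_of_int_ceiling)
  have "real k \<le> real_of_int \<lceil>x\<rceil>" using a c by (rule order_trans)
  then have "(of_int (int k) :: real) \<le> of_int \<lceil>x\<rceil>" by simp
  then have "int k \<le> \<lceil>x\<rceil>" by (simp only: of_int_le_iff)
  then have "nat (int k) \<le> nat \<lceil>x\<rceil>" by (rule nat_mono)
  then show ?thesis by simp
qed

theorem theorem3p25:
  "\<exists>C::real. \<forall>t. leaves_deg1 t \<longrightarrow> (\<forall>s \<in> subtrees t.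
      degree (tpoly s) \<le> tower (nat \<lceil>C * log 2 (real (num_nodes t))\<rceil>))"
proof (intro exI[of _ 12] allI impI ballI)
  fix t s assume d: "leaves_deg1 t" and s: "s \<in> subtrees t"
  define n where "n = num_nodes t"
  show "degree (tpoly s) \<le> tower (nat \<lceil>12 * log 2 (real (num_nodes t))\<rceil>)"
  proof (cases "n = 1")
    case True
    have "\<exists>p. t = Leaf p"
    proof (cases t)
      case (Leaf p) then show ?thesis by blast
    next
      case (Node a b)
      have "1 \<le> num_nodes a" "1 \<le> num_nodes b" by (rule num_nodes_pos)+
      then have "3 \<le> n" using Node n_def by simp
      then show ?thesis using True by simp
    qed
    then obtain p where tp: "t = Leaf p" by blast
    then have "s = Leaf p" using s by simp
    then have "degree (tpoly s) = 1" using d tp by simp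
    moreover have "num_nodes t = 1" using True n_def by simp
    ultimately show ?thesis by simp
  next
    case False
    then have n2: "2 \<le> n" using num_nodes_pos[of t] unfolding n_def by linarith
    have ex: "\<exists>j. n < 2^j" using less_exp by blast
    define j where "j = (LEAST j. n < 2^j)"
    have nj: "n < 2^j" unfolding j_def by (rule LeastI_ex[OF ex])
    have j0: "1 \<le> j"
    proof (rule ccontr)
      assume "\<not> 1 \<le> j" then have "j = 0" by simp
      then show False using nj n2 by simp
    qed
    have "j - 1 < j" using j0 by simp
    then have "\<not> n < 2^(j-1)" unfolding j_def by (rule not_less_Least)
    then have pj: "2^(j-1) \<le> n" by simp
    have lg: "real (j-1) \<le> log 2 (real n)" using le_log2_of_power[OF pj] .
    have "2^1 \<le> n" using n2 by simp
    then have lg1: "real 1 \<le> log 2 (real n)" by (rule le_log2_of_power)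
    have nb: "\<not> big (thr j) t"
    proof
      assume "big (thr j) t"
      then have "2^j \<le> num_nodes t" by (rule size_big[OF d])
      then show False using nj unfolding n_def by simp
    qed
    have nbs: "\<not> big (thr j) s" using big_sub[OF s] nb by blast
    have ds: "leaves_deg1 s" using subtrees_deg1[OF s d] .
    have deg: "degree (tpoly s) \<le> num_nodes s * 2^(thr j)" by (rule deg_notbig[OF ds nbs])
    have ns: "num_nodes s \<le> n" using subtrees_num[OF s] unfolding n_def .
    define T1 where "T1 = tower (4*j+2)"
    have T4: "4 \<le> T1" unfolding T1_def by (rule tower4)
    have "4*j+2+1 \<le> T1" unfolding T1_def by (rule tower_ge)
    then have jT: "j \<le> T1" by simp
    have jj: "(2::nat)^j \<le> 2^T1" using jT by (rule power_increasing) simp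
    have nT: "n \<le> 2^T1" using nj jj by linarith
    have "thr j \<le> T1" unfolding T1_def by (rule thr_bound)
    then have tT: "(2::nat)^(thr j) \<le> 2^T1" by (rule power_increasing) simp
    have "degree (tpoly s) \<le> n * 2^(thr j)" using deg ns by (meson mult_le_mono1 order_trans)
    also have "\<dots> \<le> 2^T1 * 2^T1" using nT tT by (rule mult_le_mono)
    also have "\<dots> = 2^(2*T1)" by (simp only: mult_2 power_add)
    also have "\<dots> \<le> 2^(2^T1)"
    proof (rule power_increasing)
      show "2 * T1 \<le> 2^T1" using two_lin[OF T4] by simp
    qed simp
    also have "\<dots> = tower (4*j+4)"
    proof -
      have "tower (Suc (Suc (4*j+2))) = 2^(2^T1)" unfolding T1_def by simp
      moreover have "Suc (Suc (4*j+2)) = 4*j+4" by simp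
      ultimately show ?thesis by metis
    qed
    also have "\<dots> \<le> tower (nat \<lceil>12 * log 2 (real (num_nodes t))\<rceil>)"
    proof (rule tower_mono)
      have "real (j - 1) = real j - 1" using j0 by (simp add: of_nat_diff)
      then have "real (4*j+4) \<le> 12 * log 2 (real n)" using lg lg1 by simp
      then show "4*j+4 \<le> nat \<lceil>12 * log 2 (real (num_nodes t))\<rceil>" unfolding n_def by (rule nat_ceil)
    qed
    finally show ?thesis .
  qed
qed

end
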